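(* Let $k\ge 2$ be an integer and let $\hat\lambda_k$ denote the value of $\lambda$ at the first double mode of the Poisson distribution of order $k$ (as defined in the context). Then $$\hat\lambda_k \ge \frac{2}{k+1}.$$
   Context: For an integer $k\ge1$ and a real $\lambda>0$, the Poisson distribution of order $k$ with parameter $\lambda$ is the distribution on $\{0,1,2,\dots\}$ with probability mass function $$f_k(n;\lambda)=e^{-k\lambda}\sum_{\substack{n_1,\dots,n_k\ge 0\\ n_1+2n_2+\dots+kn_k=n}}\frac{\lambda^{n_1+\dots+n_k}}{n_1!\cdots n_k!},\qquad n=0,1,2,\dots$$ A mode is any $n$ at which $f_k(n;\lambda)$ attains its global maximum over $n\ge0$. The distribution has a double mode at $m_1\neq m_2$ if $m_1$ and $m_2$ are exactly the two modes. The "first double mode" refers to the smallest value of $\lambda>0$, denoted $\hat\lambda_k$, at which the distribution has a double mode; at this value the two modes are $0$ and a positive integer $\hat m_k$. *)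

theory Defs
  imports Complex_Main
begin

definition poisson_k_idx :: "nat \<Rightarrow> nat \<Rightarrow> (nat \<Rightarrow> nat) set" where
  "poisson_k_idx k n = {c. (\<forall>i. i \<notin> {1..k} \<longrightarrow> c i = 0) \<and> (\<Sum>i=1..k. i * c i) = n}"

definition poisson_k_pmf :: "nat \<Rightarrow> real \<Rightarrow> nat \<Rightarrow> real" where
  "poisson_k_pmf k lam n = exp (- real k * lam) *
     (\<Sum>c\<in>poisson_k_idx k n. lam ^ (\<Sum>i=1..k. c i) / (\<Prod>i=1..k. fact (c i)))"

definition is_mode :: "nat \<Rightarrow> real \<Rightarrow> nat \<Rightarrow> bool" where
  "is_mode k lam n \<longleftrightarrow> (\<forall>m. poisson_k_pmf k lam m \<le> poisson_k_pmf k lam n)"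

definition has_double_mode :: "nat \<Rightarrow> real \<Rightarrow> bool" where
  "has_double_mode k lam \<longleftrightarrow>
     (\<exists>m1 m2. m1 \<noteq> m2 \<and> {n. is_mode k lam n} = {m1, m2})"

definition is_first_double_mode :: "nat \<Rightarrow> real \<Rightarrow> bool" where
  "is_first_double_mode k lam \<longleftrightarrow>
     lam > 0 \<and> has_double_mode k lam \<and> (\<forall>mu. 0 < mu \<and> mu < lam \<longrightarrow> \<not> has_double_mode k mu)"

end

theory Submission
  imports Defs
begin

definition wt :: "nat \<Rightarrow> real \<Rightarrow> (nat \<Rightarrow> nat) \<Rightarrow> real" where
  "wt k lam c = lam ^ (\<Sum>i=1..k. c i) / (\<Prod>i=1..k. fact (c i))"

definition gg :: "nat \<Rightarrow> real \<Rightarrow> nat \<Rightarrow> real" where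
  "gg k lam n = (\<Sum>c\<in>poisson_k_idx k n. wt k lam c)"

lemma pmf_gg: "poisson_k_pmf k lam n = exp (- real k * lam) * gg k lam n"
  unfolding poisson_k_pmf_def gg_def wt_def by simp

lemma idx_bound:
  assumes "c \<in> poisson_k_idx k n" shows "c i * i \<le> n"
proof (cases "i \<in> {1..k}")
  case True
  have "i * c i \<le> (\<Sum>j=1..k. j * c j)"
    by (rule member_le_sum) (use True in auto)
  then show ?thesis using assms unfolding poisson_k_idx_def by (simp add: mult.commute)
next
  case False then show ?thesis using assms unfolding poisson_k_idx_def by auto
qed

lemma idx_finite: "finite (poisson_k_idx k n)"
proof -
  have "poisson_k_idx k n \<subseteq> {f. \<forall>x. (x \<in> {1..k} \<longrightarrow> f x \<in> {0..n}) \<and> (x \<notin> {1..k} \<longrightarrow> f x = 0)}"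
  proof
    fix c assume c: "c \<in> poisson_k_idx k n"
    have "\<forall>x. x \<in> {1..k} \<longrightarrow> c x \<le> n"
    proof (intro allI impI)
      fix x assume "x \<in> {1..k}"
      then have "c x \<le> c x * x" by auto
      also have "\<dots> \<le> n" using idx_bound[OF c] .
      finally show "c x \<le> n" .
    qed
    then show "c \<in> {f. \<forall>x. (x \<in> {1..k} \<longrightarrow> f x \<in> {0..n}) \<and> (x \<notin> {1..k} \<longrightarrow> f x = 0)}"
      using c unfolding poisson_k_idx_def by auto
  qed
  moreover have "finite {f. \<forall>x. (x \<in> {1..k} \<longrightarrow> f x \<in> {0..n}) \<and> (x \<notin> {1..k} \<longrightarrow> f x = (0::nat))}"
    by (rule finite_set_of_finite_funs) auto
  ultimately show ?thesis by (rule finite_subset)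
qed

lemma idx_zero: "poisson_k_idx k 0 = {\<lambda>_. 0}"
proof
  show "poisson_k_idx k 0 \<subseteq> {\<lambda>_. 0}"
  proof
    fix c assume c: "c \<in> poisson_k_idx k 0"
    have "\<forall>i. c i = 0"
    proof
      fix i have "c i * i \<le> 0" using idx_bound[OF c] .
      then show "c i = 0" using c unfolding poisson_k_idx_def
        by (cases "i \<in> {1..k}") auto
    qed
    then show "c \<in> {\<lambda>_. 0}" by auto
  qed
  show "{\<lambda>_. 0} \<subseteq> poisson_k_idx k 0" unfolding poisson_k_idx_def by auto
qed

lemma gg_zero: "gg k lam 0 = 1"
  unfolding gg_def idx_zero wt_def by simp

lemma gg_nonneg: "lam \<ge> 0 \<Longrightarrow> gg k lam n \<ge> 0"
  unfolding gg_def wt_def by (intro sum_nonneg divide_nonneg_nonneg zero_le_power prod_nonneg) auto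

lemma sum_upd:
  fixes f :: "nat \<Rightarrow> 'a::comm_monoid_add"
  assumes "(i::nat) \<in> {1..k}"
  shows "(\<Sum>j=1..k. f ((c(i := v)) j)) = f v + (\<Sum>j\<in>{1..k}-{i}. f (c j))"
proof -
  have "(\<Sum>j=1..k. f ((c(i := v)) j)) = f ((c(i := v)) i) + (\<Sum>j\<in>{1..k}-{i}. f ((c(i := v)) j))"
    by (rule sum.remove) (use assms in auto)
  also have "(\<Sum>j\<in>{1..k}-{i}. f ((c(i := v)) j)) = (\<Sum>j\<in>{1..k}-{i}. f (c j))"
    by (rule sum.cong) auto
  finally show ?thesis by simp
qed

lemma prod_upd:
  fixes f :: "nat \<Rightarrow> 'a::comm_monoid_mult"
  assumes "(i::nat) \<in> {1..k}"
  shows "(\<Prod>j=1..k. f ((c(i := v)) j)) = f v * (\<Prod>j\<in>{1..k}-{i}. f (c j))"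
proof -
  have "(\<Prod>j=1..k. f ((c(i := v)) j)) = f ((c(i := v)) i) * (\<Prod>j\<in>{1..k}-{i}. f ((c(i := v)) j))"
    by (rule prod.remove) (use assms in auto)
  also have "(\<Prod>j\<in>{1..k}-{i}. f ((c(i := v)) j)) = (\<Prod>j\<in>{1..k}-{i}. f (c j))"
    by (rule prod.cong) auto
  finally show ?thesis by simp
qed

lemma wt_step:
  assumes "i \<in> {1..k}"
  shows "real (c i + 1) * wt k lam (c(i := c i + 1)) = lam * wt k lam c"
proof -
  have s1: "(\<Sum>j=1..k. (c(i := c i + 1)) j) = (c i + 1) + (\<Sum>j\<in>{1..k}-{i}. c j)"
    using sum_upd[OF assms, of "\<lambda>x. x"] by simp
  have s0: "(\<Sum>j=1..k. c j) = c i + (\<Sum>j\<in>{1..k}-{i}. c j)"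
    by (rule sum.remove) (use assms in auto)
  have p1: "(\<Prod>j=1..k. fact ((c(i := c i + 1)) j)) = (fact (c i + 1) :: real) * (\<Prod>j\<in>{1..k}-{i}. fact (c j))"
    using prod_upd[OF assms, of "\<lambda>x. fact x :: real"] by simp
  have p0: "(\<Prod>j=1..k. fact (c j)) = (fact (c i) :: real) * (\<Prod>j\<in>{1..k}-{i}. fact (c j))"
    by (rule prod.remove) (use assms in auto)
  define P where "P = (\<Prod>j\<in>{1..k}-{i}. fact (c j) :: real)"
  define S where "S = (\<Sum>j\<in>{1..k}-{i}. c j)"
  have Ppos: "P > 0" unfolding P_def by (intro prod_pos) auto
  have "real (c i + 1) * wt k lam (c(i := c i + 1))
      = real (c i + 1) * (lam ^ (c i + 1 + S) / (fact (c i + 1) * P))"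
    unfolding wt_def s1 p1 S_def P_def by simp
  also have "\<dots> = lam * (lam ^ (c i + S) / (fact (c i) * P))"
    using Ppos by (simp add: fact_Suc field_simps del: of_nat_Suc)
  also have "\<dots> = lam * wt k lam c"
    unfolding wt_def s0 p0 S_def P_def by simp
  finally show ?thesis .
qed

lemma key:
  assumes i: "i \<in> {1..k}" and "i \<le> n"
  shows "(\<Sum>c\<in>poisson_k_idx k n. real (c i) * wt k lam c) = lam * gg k lam (n - i)"
proof -
  let ?A = "{c\<in>poisson_k_idx k n. c i \<ge> 1}"
  have "(\<Sum>c\<in>poisson_k_idx k n. real (c i) * wt k lam c) = (\<Sum>c\<in>?A. real (c i) * wt k lam c)"
    by (rule sum.mono_neutral_right) (auto simp: idx_finite)
  also have "\<dots> = (\<Sum>c\<in>poisson_k_idx k (n - i). real ((c(i := c i + 1)) i) * wt k lam (c(i := c i + 1)))"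
  proof (rule sum.reindex_bij_betw[symmetric])
    show "bij_betw (\<lambda>c. c(i := c i + 1)) (poisson_k_idx k (n - i)) ?A"
    proof (rule bij_betw_byWitness[where f' = "\<lambda>c. c(i := c i - 1)"])
      show "\<forall>a\<in>poisson_k_idx k (n - i). (a(i := a i + 1))(i := (a(i := a i + 1)) i - 1) = a"
        by auto
      show "\<forall>a\<in>?A. (a(i := a i - 1))(i := (a(i := a i - 1)) i + 1) = a"
        by auto
      show "(\<lambda>c. c(i := c i + 1)) ` poisson_k_idx k (n - i) \<subseteq> ?A"
      proof clarify
        fix c assume c: "c \<in> poisson_k_idx k (n - i)"
        have "(\<Sum>j=1..k. j * (c(i := c i + 1)) j) = i * (c(i := c i + 1)) i + (\<Sum>j\<in>{1..k}-{i}. j * (c(i := c i + 1)) j)"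
          by (rule sum.remove) (use i in auto)
        also have "(\<Sum>j\<in>{1..k}-{i}. j * (c(i := c i + 1)) j) = (\<Sum>j\<in>{1..k}-{i}. j * c j)"
          by (rule sum.cong) auto
        finally have "(\<Sum>j=1..k. j * (c(i := c i + 1)) j) = i * (c i + 1) + (\<Sum>j\<in>{1..k}-{i}. j * c j)"
          by simp
        moreover have "(\<Sum>j=1..k. j * c j) = i * c i + (\<Sum>j\<in>{1..k}-{i}. j * c j)"
          by (rule sum.remove) (use i in auto)
        ultimately have "(\<Sum>j=1..k. j * (c(i := c i + 1)) j) = n"
          using c \<open>i \<le> n\<close> unfolding poisson_k_idx_def by (simp, linarith)
        then show "c(i := c i + 1) \<in> poisson_k_idx k n \<and> 1 \<le> (c(i := c i + 1)) i"
          using c i unfolding poisson_k_idx_def by auto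
      qed
      show "(\<lambda>c. c(i := c i - 1)) ` ?A \<subseteq> poisson_k_idx k (n - i)"
      proof clarify
        fix c assume c: "c \<in> poisson_k_idx k n" and ci: "1 \<le> c i"
        have "(\<Sum>j=1..k. j * (c(i := c i - 1)) j) = i * (c(i := c i - 1)) i + (\<Sum>j\<in>{1..k}-{i}. j * (c(i := c i - 1)) j)"
          by (rule sum.remove) (use i in auto)
        also have "(\<Sum>j\<in>{1..k}-{i}. j * (c(i := c i - 1)) j) = (\<Sum>j\<in>{1..k}-{i}. j * c j)"
          by (rule sum.cong) auto
        finally have "(\<Sum>j=1..k. j * (c(i := c i - 1)) j) = i * (c i - 1) + (\<Sum>j\<in>{1..k}-{i}. j * c j)"
          by simp
        moreover have "(\<Sum>j=1..k. j * c j) = i * c i + (\<Sum>j\<in>{1..k}-{i}. j * c j)"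
          by (rule sum.remove) (use i in auto)
        moreover have "i * c i = i * (c i - 1) + i" using ci
          by (metis add.commute le_add_diff_inverse mult.right_neutral distrib_left)
        ultimately have "(\<Sum>j=1..k. j * (c(i := c i - 1)) j) = n - i"
          using c unfolding poisson_k_idx_def by (simp, linarith)
        then show "c(i := c i - 1) \<in> poisson_k_idx k (n - i)"
          using c i unfolding poisson_k_idx_def by auto
      qed
    qed
  qed
  also have "\<dots> = (\<Sum>c\<in>poisson_k_idx k (n - i). lam * wt k lam c)"
    by (rule sum.cong) (use wt_step[OF i] in auto)
  also have "\<dots> = lam * gg k lam (n - i)"
    unfolding gg_def by (simp add: sum_distrib_left)
  finally show ?thesis .
qed

lemma key0:
  assumes "i > n"
  shows "(\<Sum>c\<in>poisson_k_idx k n. real (c i) * wt k lam c) = 0"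
proof (rule sum.neutral, rule ballI)
  fix c assume c: "c \<in> poisson_k_idx k n"
  have "c i * i \<le> n" by (rule idx_bound[OF c])
  have "c i = 0"
  proof (rule ccontr)
    assume "c i \<noteq> 0"
    then have "1 * i \<le> c i * i" by (intro mult_right_mono) auto
    with \<open>c i * i \<le> n\<close> assms show False by linarith
  qed
  then show "real (c i) * wt k lam c = 0" by simp
qed

lemma recur:
  "real n * gg k lam n = lam * (\<Sum>i=1..min k n. real i * gg k lam (n - i))"
proof -
  have SS: "{1..k} \<inter> {i. i \<le> n} = {1..min k n}" by auto
  have "real n * gg k lam n = (\<Sum>c\<in>poisson_k_idx k n. real n * wt k lam c)"
    unfolding gg_def by (simp add: sum_distrib_left)
  also have "\<dots> = (\<Sum>c\<in>poisson_k_idx k n. (\<Sum>i=1..k. real i * (real (c i) * wt k lam c)))"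
  proof (rule sum.cong)
    fix c assume c: "c \<in> poisson_k_idx k n"
    have "real n = real (\<Sum>i=1..k. i * c i)" using c unfolding poisson_k_idx_def by simp
    then show "real n * wt k lam c = (\<Sum>i=1..k. real i * (real (c i) * wt k lam c))"
      by (simp add: sum_distrib_right mult.assoc)
  qed simp
  also have "\<dots> = (\<Sum>i=1..k. real i * (\<Sum>c\<in>poisson_k_idx k n. real (c i) * wt k lam c))"
    by (subst sum.swap) (simp only: sum_distrib_left)
  also have "\<dots> = (\<Sum>i=1..k. if i \<le> n then real i * (lam * gg k lam (n - i)) else 0)"
    by (rule sum.cong) (auto simp: key key0)
  also have "\<dots> = (\<Sum>i\<in>{1..k} \<inter> {i. i \<le> n}. real i * (lam * gg k lam (n - i)))"
    by (simp add: sum.inter_restrict)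
  also have "\<dots> = lam * (\<Sum>i=1..min k n. real i * gg k lam (n - i))"
    unfolding SS by (simp only: sum_distrib_left mult.left_commute)
  finally show ?thesis .
qed

lemma gauss_real: "(\<Sum>i=1..m. real i) = real m * (real m + 1) / 2"
  by (induction m) (auto simp: field_simps)

lemma num_bound:
  fixes lam :: real
  assumes "0 < lam" "lam < 2 / (real k + 1)" "1 \<le> m" "m \<le> k"
  shows "lam * (real m * (real m + 1) / 2) < real m"
proof -
  have "lam * (real k + 1) < 2" using assms(2) by (simp add: less_divide_eq)
  moreover have "lam * (real m + 1) \<le> lam * (real k + 1)"
    using assms(1,4) by (intro mult_left_mono) auto
  ultimately have "lam * (real m + 1) < 2" by linarith
  then have "real m * (lam * (real m + 1)) < real m * 2" using assms(3) by simp
  then show ?thesis by (simp add: algebra_simps)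
qed

lemma gg_lt1:
  assumes lam: "0 < lam" "lam < 2 / (real k + 1)" and k: "k \<ge> 1"
  shows "n \<ge> 1 \<Longrightarrow> gg k lam n < 1"
proof (induction n rule: less_induct)
  case (less n)
  define m where "m = min k n"
  have m1: "m \<ge> 1" "m \<le> k" "m \<le> n" using k less.prems unfolding m_def by auto
  have le1: "gg k lam (n - i) \<le> 1" if "i \<in> {1..m}" for i
  proof (cases "n - i = 0")
    case True then show ?thesis by (simp only: True gg_zero order_refl)
  next
    case False
    have a: "n - i < n" "1 \<le> n - i" using that m1 False by auto
    from less.IH[OF a(1) a(2)] show ?thesis by (rule less_imp_le)
  qed
  have "real n * gg k lam n = lam * (\<Sum>i=1..m. real i * gg k lam (n - i))"
    unfolding m_def by (rule recur)
  also have "\<dots> \<le> lam * (\<Sum>i=1..m. real i)"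
  proof -
    have "(\<Sum>i=1..m. real i * gg k lam (n - i)) \<le> (\<Sum>i=1..m. real i)"
    proof (rule sum_mono)
      fix i assume "i \<in> {1..m}"
      from le1[OF this] show "real i * gg k lam (n - i) \<le> real i" by (rule mult_left_le) simp
    qed
    then show ?thesis using lam(1) by (simp add: mult_left_mono)
  qed
  also have "\<dots> = lam * (real m * (real m + 1) / 2)" unfolding gauss_real ..
  also have "\<dots> < real m" by (rule num_bound[OF lam m1(1) m1(2)])
  also have "\<dots> \<le> real n" using m1 by simp
  finally have "real n * gg k lam n < real n * 1" by simp
  moreover have "real n > 0" using m1 by simp
  ultimately show ?case by (simp only: mult_less_cancel_left_pos)
qed

theorem proposition2:
  fixes k :: nat and lam :: real
  assumes "k \<ge> 2"
    and "is_first_double_mode k lam"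
  shows "lam \<ge> 2 / (real k + 1)"
proof (rule ccontr)
  assume "\<not> ?thesis"
  then have lt: "lam < 2 / (real k + 1)" by simp
  have pos: "lam > 0" and dm: "has_double_mode k lam"
    using assms(2) unfolding is_first_double_mode_def by auto
  have modes: "{n. is_mode k lam n} = {0}"
  proof -
    have "is_mode k lam n \<longleftrightarrow> n = 0" for n
    proof
      have cmp: "poisson_k_pmf k lam m < poisson_k_pmf k lam 0" if "m \<ge> 1" for m
        using gg_lt1[OF pos lt _ that] assms(1) by (simp add: pmf_gg gg_zero)
      show "is_mode k lam n \<Longrightarrow> n = 0"
        using cmp[of n] unfolding is_mode_def
        by (metis not_le less_one less_le_not_le)
      show "n = 0 \<Longrightarrow> is_mode k lam n"
        unfolding is_mode_def using cmp
        by (metis less_eq_real_def order_refl less_one not_le)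
    qed
    then show ?thesis by auto
  qed
  from dm obtain m1 m2 where "m1 \<noteq> m2" "{n. is_mode k lam n} = {m1, m2}"
    unfolding has_double_mode_def by auto
  with modes have "m1 \<in> {0}" "m2 \<in> {0}" by auto
  with \<open>m1 \<noteq> m2\<close> show False by simp
qed

end
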